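(* Let $N\ge3$ and $p>p_{\rm S}$. Suppose $y^*$ is a solution, defined on $(-\infty,T]$ for some $T\in\mathbb{R}$, of $$y''+\alpha y'-y+y^p+B_0(t)y^p+B_1(t)y=0,\qquad y(t)\to1\ \text{as }t\to-\infty.$$ Then $y^*(t)=1+O(e^{2mt})$ as $t\to-\infty$.
   Context: $p_{\rm S}=\frac{N+2}{N-2}$, $\mu=\frac{2}{p-1}$, $a=\{\mu(N-2-\mu)\}^{\mu/2}$, $m=a^{-(p-1)/2}$, $\alpha=m(N-2-2\mu)$, $q=\frac{N-2}{2}(p-p_{\rm S})$, $B_0(t)=(1+e^{2mt})^q-1$, $B_1(t)=\frac{N(N-2)e^{2mt}}{(1+e^{2mt})^2}$. *)

theory Defs
  imports "HOL-Analysis.Analysis" "HOL-Library.Landau_Symbols"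
begin

definition pS :: "nat \<Rightarrow> real" where
  "pS N = (real N + 2) / (real N - 2)"

definition mu :: "real \<Rightarrow> real" where
  "mu p = 2 / (p - 1)"

definition aconst :: "nat \<Rightarrow> real \<Rightarrow> real" where
  "aconst N p = (mu p * (real N - 2 - mu p)) powr (mu p / 2)"

definition mconst :: "nat \<Rightarrow> real \<Rightarrow> real" where
  "mconst N p = aconst N p powr (- (p - 1) / 2)"

definition alpha :: "nat \<Rightarrow> real \<Rightarrow> real" where
  "alpha N p = mconst N p * (real N - 2 - 2 * mu p)"

definition qconst :: "nat \<Rightarrow> real \<Rightarrow> real" where
  "qconst N p = (real N - 2) / 2 * (p - pS N)"

definition B0 :: "nat \<Rightarrow> real \<Rightarrow> real \<Rightarrow> real" where
  "B0 N p t = (1 + exp (2 * mconst N p * t)) powr (qconst N p) - 1"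

definition B1 :: "nat \<Rightarrow> real \<Rightarrow> real \<Rightarrow> real" where
  "B1 N p t = real N * (real N - 2) * exp (2 * mconst N p * t)
              / (1 + exp (2 * mconst N p * t))^2"

end

theory Submission
  imports Defs "HOL-Real_Asymp.Real_Asymp"
begin

lemma key_ineq:
  fixes a b e d Nn F E w z :: real
  assumes a: "a > 0" and b: "b > 0" and hN: "\<bar>Nn\<bar> \<le> e * \<bar>z\<bar>" and e0: "e \<ge> 0"
    and e1: "e \<le> a/4" and e2: "e * (1 + a) \<le> a * b / 4" and hF: "\<bar>F\<bar> \<le> E"
    and d0: "d > 0" and d1: "d * (1 + a/2) \<le> a/2" and d2: "d * (b + a^2/2 + a/2) \<le> a*b/2"
  shows "- a * w^2 - a * b * z^2 - (Nn + F) * (2*w + a*z)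
     \<le> - d * (w^2 + a*z*w + (b + a^2/2) * z^2) + (4/a + a/b) * E^2"
proof -
  have zw: "2*\<bar>z\<bar>*\<bar>w\<bar> \<le> z^2 + w^2"
  proof -
    have "0 \<le> (\<bar>z\<bar> - \<bar>w\<bar>)^2" by simp
    also have "\<dots> = z^2 + w^2 - 2*\<bar>z\<bar>*\<bar>w\<bar>" unfolding power2_diff power2_abs by simp
    finally show ?thesis by simp
  qed
  have "- Nn * (2*w + a*z) \<le> \<bar>Nn\<bar> * (2*\<bar>w\<bar> + a*\<bar>z\<bar>)"
  proof -
    have "- Nn * (2*w + a*z) \<le> \<bar>Nn * (2*w + a*z)\<bar>" by linarith
    also have "\<dots> = \<bar>Nn\<bar> * \<bar>2*w + a*z\<bar>" by (simp add: abs_mult)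
    also have "\<bar>2*w + a*z\<bar> \<le> 2*\<bar>w\<bar> + a*\<bar>z\<bar>"
      using abs_triangle_ineq[of "2*w" "a*z"] a by (simp add: abs_mult)
    hence "\<bar>Nn\<bar> * \<bar>2*w + a*z\<bar> \<le> \<bar>Nn\<bar> * (2*\<bar>w\<bar> + a*\<bar>z\<bar>)" by (simp add: mult_left_mono)
    finally show ?thesis .
  qed
  also have "\<dots> \<le> e * \<bar>z\<bar> * (2*\<bar>w\<bar> + a*\<bar>z\<bar>)"
    using hN a by (intro mult_right_mono) auto
  also have "\<dots> = e * (2*\<bar>z\<bar>*\<bar>w\<bar>) + e*a*z^2"
    by (simp add: algebra_simps power2_eq_square)
  also have "\<dots> \<le> e * (z^2 + w^2) + e*a*z^2"
    using zw e0 by (simp add: mult_left_mono)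
  also have "\<dots> = e * w^2 + e*(1+a)*z^2" by (simp add: algebra_simps)
  also have "\<dots> \<le> (a/4) * w^2 + (a*b/4) * z^2"
    using e1 e2 by (intro add_mono mult_right_mono) auto
  finally have h1: "- Nn * (2*w + a*z) \<le> (a/4) * w^2 + (a*b/4) * z^2" .
  have h3: "- F * (2*w) \<le> (a/4)*w^2 + (4/a)*F^2"
  proof -
    have "0 \<le> (a/4) * (w + 4*F/a)^2" using a by simp
    also have "\<dots> = (a/4)*w^2 + 2*F*w + (4/a)*F^2" using a
      by (simp add: power2_eq_square field_simps)
    finally show ?thesis by simp
  qed
  have h4: "- F * (a*z) \<le> (a*b/4)*z^2 + (a/b)*F^2"
  proof -
    have "0 \<le> (a*b/4) * (z + 2*F/b)^2" using a b by simp
    also have "\<dots> = (a*b/4)*z^2 + a*F*z + (a/b)*F^2" using b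
      by (simp add: power2_eq_square field_simps)
    finally show ?thesis by (simp add: algebra_simps)
  qed
  have h5: "F^2 \<le> E^2" using power_mono[OF hF abs_ge_zero, of 2] by simp
  have h5': "(4/a + a/b) * F^2 \<le> (4/a + a/b) * E^2" using h5 a b by (intro mult_left_mono) auto
  have azw: "a*z*w \<le> (a/2)*(z^2+w^2)"
  proof -
    have "0 \<le> (z - w)^2" by simp
    hence "z*w \<le> (z^2+w^2)/2" unfolding power2_diff by simp
    hence "a*(z*w) \<le> a*((z^2+w^2)/2)" using a by (simp add: mult_left_mono)
    thus ?thesis by simp
  qed
  have hV: "w^2 + a*z*w + (b + a^2/2) * z^2 \<le> (1 + a/2)*w^2 + (b + a^2/2 + a/2)*z^2"
    using azw by (simp add: algebra_simps)
  have h6: "d * (w^2 + a*z*w + (b + a^2/2) * z^2) \<le> (a/2)*w^2 + (a*b/2)*z^2"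
  proof -
    have "d * (w^2 + a*z*w + (b + a^2/2) * z^2) \<le> d * ((1 + a/2)*w^2 + (b + a^2/2 + a/2)*z^2)"
      using hV d0 by (intro mult_left_mono) auto
    also have "\<dots> = (d*(1 + a/2))*w^2 + (d*(b + a^2/2 + a/2))*z^2" by (simp add: algebra_simps)
    also have "\<dots> \<le> (a/2)*w^2 + (a*b/2)*z^2"
      using d1 d2 by (intro add_mono mult_right_mono) auto
    finally show ?thesis .
  qed
  have "- a * w^2 - a * b * z^2 - (Nn + F) * (2*w + a*z)
      = - a * w^2 - a * b * z^2 + (- Nn * (2*w + a*z)) + (- F * (2*w)) + (- F * (a*z))"
    by (simp add: algebra_simps)
  also have "\<dots> \<le> - a * w^2 - a * b * z^2 + ((a/4) * w^2 + (a*b/4) * z^2)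
      + ((a/4)*w^2 + (4/a)*F^2) + ((a*b/4)*z^2 + (a/b)*F^2)"
    using h1 h3 h4 by linarith
  also have "\<dots> = - ((a/2)*w^2 + (a*b/2)*z^2) + (4/a + a/b) * F^2" by (simp add: algebra_simps)
  also have "\<dots> \<le> - d * (w^2 + a*z*w + (b + a^2/2) * z^2) + (4/a + a/b) * E^2"
    using h6 h5' by linarith
  finally show ?thesis .
qed

lemma exp_sq: "(exp (2*m*t::real))^2 = exp (4*m*t)"
proof -
  have "4*m*t = 2*m*t + 2*m*t" by (simp add: algebra_simps)
  hence "exp (4*m*t) = exp (2*m*t) * exp (2*m*t)" by (simp add: exp_add[symmetric])
  thus ?thesis by (simp add: power2_eq_square)
qed

lemma B0_O: "(m::real) > 0 \<Longrightarrow> (\<lambda>t. (1 + exp (2*m*t)) powr q - 1) \<in> O[at_bot](\<lambda>t. exp (2*m*t))"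
  by real_asymp

lemma phi_o: "(\<lambda>x::real. x powr p - 1 - p*(x-1)) \<in> o[at 1](\<lambda>x. x - 1)"
  by real_asymp

lemma B1_O: "(m::real) > 0 \<Longrightarrow> (\<lambda>t. c * exp (2*m*t) / (1 + exp (2*m*t))^2) \<in> O[at_bot](\<lambda>t. exp (2*m*t))"
  by real_asymp

lemma exp_lim0: "(d::real) > 0 \<Longrightarrow> filterlim (\<lambda>x. c * exp (d * x)) (nhds 0) at_bot"
  by real_asymp

theorem lemma4p1:
  fixes N :: nat and p T :: real and y y' y'' :: "real \<Rightarrow> real"
  assumes "N \<ge> 3"
    and "p > pS N"
    and "\<And>t. t \<le> T \<Longrightarrow> (y has_real_derivative y' t) (at t within {..T})"
    and "\<And>t. t \<le> T \<Longrightarrow> (y' has_real_derivative y'' t) (at t within {..T})"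
    and "\<And>t. t \<le> T \<Longrightarrow>
           y'' t + alpha N p * y' t - y t + y t powr p
           + B0 N p t * y t powr p + B1 N p t * y t = 0"
    and "(y \<longlongrightarrow> 1) at_bot"
  shows "(\<lambda>t. y t - 1) \<in> O[at_bot](\<lambda>t. exp (2 * mconst N p * t))"
proof -
  define m where "m = mconst N p"
  define al where "al = alpha N p"
  define be where "be = p - 1"
  define bb where "bb = be + al^2/2"
  have N3: "real N \<ge> 3" using assms(1) by simp
  have N2: "real N - 2 > 0" using N3 by simp
  have hp: "p * (real N - 2) > real N + 2"
    using assms(2) N2 unfolding pS_def by (simp add: divide_less_eq)
  have p1: "p > 1"
  proof (rule ccontr)
    assume "\<not> p > 1"
    hence "p * (real N - 2) \<le> 1 * (real N - 2)" using N2 by (intro mult_right_mono) auto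
    thus False using hp by simp
  qed
  have hp4: "(p - 1) * (real N - 2) > 4" using hp by (simp add: algebra_simps)
  have mu_pos: "mu p > 0" unfolding mu_def using p1 by simp
  have mu_lt: "2 * mu p < real N - 2"
  proof -
    have "2 * mu p = 4 / (p - 1)" unfolding mu_def by simp
    also have "\<dots> < real N - 2" using hp4 p1 by (simp add: divide_less_eq mult.commute)
    finally show ?thesis .
  qed
  have base_pos: "mu p * (real N - 2 - mu p) > 0" using mu_pos mu_lt by simp
  have a_pos: "aconst N p > 0" unfolding aconst_def powr_gt_zero using base_pos by (metis less_irrefl)
  have m_pos: "m > 0" unfolding m_def mconst_def using a_pos by simp
  have al_pos: "al > 0" unfolding al_def alpha_def using m_pos[unfolded m_def] mu_lt by simp
  have be_pos: "be > 0" unfolding be_def using p1 by simp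
  have bb_pos: "bb > 0"
  proof -
    have "al^2/2 \<ge> 0" by simp
    thus ?thesis unfolding bb_def using be_pos by linarith
  qed
  define eta where "eta = min (al/4) (al*be/(4*(1+al)))"
  have eta_pos: "eta > 0" unfolding eta_def using al_pos be_pos by simp
  have eta1: "eta \<le> al/4" unfolding eta_def by (rule min.cobounded1)
  have eta2: "eta * (1 + al) \<le> al * be / 4"
  proof -
    have "eta \<le> al*be/(4*(1+al))" unfolding eta_def by (rule min.cobounded2)
    thus ?thesis using al_pos by (simp add: le_divide_eq algebra_simps)
  qed
  define delta where "delta = min (al/(2+al)) (al*be/(2*be+al^2+al))"
  have den_pos: "2*be+al^2+al > 0" using al_pos be_pos by (simp add: add_pos_pos)
  have delta_pos: "delta > 0" unfolding delta_def using al_pos be_pos den_pos by simp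
  have delta1: "delta * (1 + al/2) \<le> al/2"
  proof -
    have "delta \<le> al/(2+al)" unfolding delta_def by (rule min.cobounded1)
    hence "delta * (2+al) \<le> al" using al_pos by (simp add: le_divide_eq)
    thus ?thesis by (simp add: field_simps)
  qed
  have delta2: "delta * (be + al^2/2 + al/2) \<le> al*be/2"
  proof -
    have "delta \<le> al*be/(2*be+al^2+al)" unfolding delta_def by (rule min.cobounded2)
    moreover note den_pos
    ultimately have "delta * (2*be+al^2+al) \<le> al*be" by (simp add: le_divide_eq)
    thus ?thesis by (simp add: field_simps)
  qed
  have ev1: "eventually (\<lambda>x. \<bar>x powr p - 1 - p*(x-1)\<bar> \<le> eta * \<bar>x - 1\<bar>) (at (1::real))"
    using landau_o.smallD[OF phi_o eta_pos] by simp
  have ev1': "eventually (\<lambda>x. \<bar>x powr p - 1 - p*(x-1)\<bar> \<le> eta * \<bar>x - 1\<bar>) (nhds (1::real))"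
    using ev1 unfolding eventually_at_filter by (rule eventually_mono) auto
  have evN: "eventually (\<lambda>t. \<bar>y t powr p - 1 - p*(y t - 1)\<bar> \<le> eta * \<bar>y t - 1\<bar>) at_bot"
    using assms(6) ev1' unfolding filterlim_iff by blast
  have "(\<lambda>t. B0 N p t) \<in> O[at_bot](\<lambda>t. exp (2*m*t))"
    unfolding B0_def m_def using B0_O[OF m_pos[unfolded m_def]] .
  then obtain c0 where c0: "c0 > 0" "eventually (\<lambda>t. norm (B0 N p t) \<le> c0 * norm (exp (2*m*t))) at_bot"
    by (rule landau_o.bigE)
  have "(\<lambda>t. B1 N p t) \<in> O[at_bot](\<lambda>t. exp (2*m*t))"
    unfolding B1_def m_def using B1_O[OF m_pos[unfolded m_def]] .
  then obtain c1 where c1: "c1 > 0" "eventually (\<lambda>t. norm (B1 N p t) \<le> c1 * norm (exp (2*m*t))) at_bot"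
    by (rule landau_o.bigE)
  have evy1: "eventually (\<lambda>t. 1/2 < y t) at_bot" using order_tendstoD(1)[OF assms(6), of "1/2"] by simp
  have evy2: "eventually (\<lambda>t. y t < 3/2) at_bot" using order_tendstoD(2)[OF assms(6), of "3/2"] by simp
  have "filterlim (\<lambda>t. y t powr p) (nhds (1 powr p)) at_bot"
    by (rule tendsto_powr[OF assms(6) tendsto_const]) simp
  hence evP: "eventually (\<lambda>t. y t powr p < 2) at_bot" using order_tendstoD(2)[of _ "1 powr p" _ 2] by simp
  have evT: "eventually (\<lambda>t. t < T) at_bot"
    unfolding eventually_at_bot_linorder by (rule exI[of _ "T - 1"]) auto
  have "eventually (\<lambda>t. t < T \<and> 1/2 < y t \<and> y t < 3/2 \<and> y t powr p < 2
      \<and> \<bar>y t powr p - 1 - p*(y t - 1)\<bar> \<le> eta * \<bar>y t - 1\<bar>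
      \<and> \<bar>B0 N p t\<bar> \<le> c0 * exp (2*m*t) \<and> \<bar>B1 N p t\<bar> \<le> c1 * exp (2*m*t)) at_bot"
    using evT evy1 evy2 evP evN c0(2) c1(2) by eventually_elim auto
  then obtain t0 where t0: "\<And>t. t \<le> t0 \<Longrightarrow> t < T \<and> 1/2 < y t \<and> y t < 3/2 \<and> y t powr p < 2
      \<and> \<bar>y t powr p - 1 - p*(y t - 1)\<bar> \<le> eta * \<bar>y t - 1\<bar>
      \<and> \<bar>B0 N p t\<bar> \<le> c0 * exp (2*m*t) \<and> \<bar>B1 N p t\<bar> \<le> c1 * exp (2*m*t)"
    unfolding eventually_at_bot_linorder by blast
  have int: "t \<in> interior {..T}" if "t < T" for t
    using interior_maximal[of "{..<T}" "{..T}"] that by auto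
  have dy: "(y has_real_derivative y' t) (at t)" if "t \<le> t0" for t
    using assms(3)[of t] at_within_interior[OF int[of t]] t0[OF that] by auto
  have dy': "(y' has_real_derivative y'' t) (at t)" if "t \<le> t0" for t
    using assms(4)[of t] at_within_interior[OF int[of t]] t0[OF that] by auto
  define C where "C = 2*c0 + 2*c1"
  define Kc where "Kc = (4/al + al/be) * C^2"
  define cc where "cc = Kc / (delta + 4*m)"
  define V where "V = (\<lambda>t. y' t ^2 + al*(y t - 1)*y' t + bb*(y t - 1)^2)"
  define Vd where "Vd = (\<lambda>t. 2*y' t*y'' t + al*(y' t*y' t + (y t - 1)*y'' t) + 2*bb*(y t - 1)*y' t)"
  define G where "G = (\<lambda>t. exp (delta*t) * V t - cc * exp ((delta + 4*m)*t))"
  have C_pos: "C > 0" unfolding C_def using c0(1) c1(1) by simp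
  have Kc_nonneg: "Kc \<ge> 0" unfolding Kc_def using al_pos be_pos by simp
  have dm_pos: "delta + 4*m > 0" using delta_pos m_pos by simp
  have cc_nonneg: "cc \<ge> 0" unfolding cc_def using Kc_nonneg dm_pos by simp
  have dV: "(V has_real_derivative Vd t) (at t)" if "t \<le> t0" for t
    unfolding V_def Vd_def using dy[OF that] dy'[OF that]
    by (auto intro!: derivative_eq_intros simp: algebra_simps power2_eq_square)
  have dG: "(G has_real_derivative (delta*exp(delta*t)*V t + exp(delta*t)*Vd t
      - cc*((delta+4*m)*exp((delta+4*m)*t)))) (at t)" if "t \<le> t0" for t
    unfolding G_def using dV[OF that] by (auto intro!: derivative_eq_intros simp: algebra_simps)
  have Vd_le: "Vd t \<le> - delta * V t + Kc * exp (4*m*t)" if "t \<le> t0" for t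
  proof -
    note h = t0[OF that]
    define w where "w = y' t"
    define z where "z = y t - 1"
    define Nn where "Nn = y t powr p - 1 - p*z"
    define F where "F = B0 N p t * y t powr p + B1 N p t * y t"
    have "t \<le> T" using h by simp
    have yeq: "y'' t = - al*w - be*z - Nn - F"
      using assms(5)[OF \<open>t \<le> T\<close>] unfolding al_def w_def z_def Nn_def F_def be_def
      by (simp add: algebra_simps)
    have Vdeq: "Vd t = -al*w^2 - al*be*z^2 - (Nn+F)*(2*w+al*z)"
      unfolding Vd_def w_def[symmetric] z_def[symmetric] yeq bb_def
      by (simp add: power2_eq_square algebra_simps)
    have Veq: "V t = w^2 + al*z*w + (be + al^2/2)*z^2"
      unfolding V_def w_def z_def bb_def by simp
    have hN: "\<bar>Nn\<bar> \<le> eta * \<bar>z\<bar>" using h unfolding Nn_def z_def by simp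
    have Pb: "0 \<le> y t powr p" "y t powr p \<le> 2" using h by auto
    have yb: "\<bar>y t\<bar> \<le> 2" using h by auto
    have ex0: "exp (2*m*t) > 0" by simp
    have "\<bar>F\<bar> \<le> \<bar>B0 N p t\<bar> * \<bar>y t powr p\<bar> + \<bar>B1 N p t\<bar> * \<bar>y t\<bar>"
      unfolding F_def by (metis abs_mult abs_triangle_ineq)
    also have "\<dots> \<le> (c0 * exp (2*m*t)) * 2 + (c1 * exp (2*m*t)) * 2"
      using h Pb yb by (intro add_mono mult_mono) auto
    also have "\<dots> = C * exp (2*m*t)" unfolding C_def by (simp add: algebra_simps)
    finally have hF: "\<bar>F\<bar> \<le> C * exp (2*m*t)" .
    have k: "- al * w^2 - al * be * z^2 - (Nn + F) * (2*w + al*z)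
     \<le> - delta * (w^2 + al*z*w + (be + al^2/2) * z^2) + (4/al + al/be) * (C * exp (2*m*t))^2"
      by (rule key_ineq[OF al_pos be_pos hN eta_pos[THEN less_imp_le] eta1 eta2 hF delta_pos delta1 delta2])
    have e2: "(C * exp (2*m*t))^2 = C^2 * exp (4*m*t)"
      using exp_sq[of m t] by (simp add: power_mult_distrib)
    show ?thesis using k unfolding Vdeq Veq e2 Kc_def by (simp add: algebra_simps)
  qed
  have Gd_le: "delta*exp(delta*t)*V t + exp(delta*t)*Vd t
      - cc*((delta+4*m)*exp((delta+4*m)*t)) \<le> 0" if "t \<le> t0" for t
  proof -
    have e: "exp((delta+4*m)*t) = exp(delta*t)*exp(4*m*t)"
      by (simp add: exp_add[symmetric] algebra_simps)
    have c: "cc*(delta+4*m) = Kc" unfolding cc_def using dm_pos by simp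
    have "delta*exp(delta*t)*V t + exp(delta*t)*Vd t - cc*((delta+4*m)*exp((delta+4*m)*t))
        = exp(delta*t)*(delta*V t + Vd t) - (cc*(delta+4*m))*(exp(delta*t)*exp(4*m*t))"
      unfolding e by (simp add: algebra_simps)
    also have "\<dots> = exp(delta*t)*(delta*V t + Vd t - Kc*exp(4*m*t))"
      unfolding c by (simp add: algebra_simps)
    also have "\<dots> \<le> 0"
      using Vd_le[OF that] by (intro mult_nonneg_nonpos) auto
    finally show ?thesis .
  qed
  have Gmono: "G t \<le> G s" if "s \<le> t" "t \<le> t0" for s t
  proof -
    have "G s \<ge> G t"
    proof (rule DERIV_nonpos_imp_nonincreasing[OF that(1)])
      fix x assume "s \<le> x" "x \<le> t"
      hence "x \<le> t0" using that by linarith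
      thus "\<exists>y. DERIV G x :> y \<and> y \<le> 0" using dG Gd_le by blast
    qed
    thus ?thesis by simp
  qed
  define Dd where "Dd = 1 + al + bb"
  have Dd_nonneg: "Dd \<ge> 0" unfolding Dd_def using al_pos bb_pos by simp
  have mvt: "\<exists>\<xi>. \<xi> < s \<and> G \<xi> \<le> exp(delta*\<xi>)*Dd" if "s \<le> t0" for s
  proof -
    have "\<exists>\<xi>. s - 1 < \<xi> \<and> \<xi> < s \<and> y s - y (s-1) = (s - (s-1)) * y' \<xi>"
      by (rule MVT2) (use dy that in auto)
    then obtain \<xi> where xi: "s-1 < \<xi>" "\<xi> < s" "y s - y (s-1) = y' \<xi>" by auto
    have hs: "1/2 < y s" "y s < 3/2" using t0[of s] that by auto
    have hs1: "1/2 < y (s-1)" "y (s-1) < 3/2" using t0[of "s-1"] that by auto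
    have hx: "1/2 < y \<xi>" "y \<xi> < 3/2" using t0[of \<xi>] that xi by auto
    have w1: "\<bar>y' \<xi>\<bar> \<le> 1" using xi(3) hs hs1 by linarith
    have z1: "\<bar>y \<xi> - 1\<bar> \<le> 1" using hx by linarith
    have a1: "y' \<xi>^2 \<le> 1" using w1 by (simp add: abs_square_le_1)
    have a2: "(y \<xi> - 1)^2 \<le> 1" using z1 by (simp add: abs_square_le_1)
    have "\<bar>(y \<xi> - 1)*y' \<xi>\<bar> \<le> 1" using w1 z1 by (simp add: abs_mult mult_le_one)
    hence a3: "al*((y \<xi> - 1)*y' \<xi>) \<le> al" using al_pos
      by (metis abs_le_D1 mult_left_mono mult.right_neutral less_imp_le)
    have a4: "bb*(y \<xi> - 1)^2 \<le> bb" using a2 bb_pos by (simp add: mult_left_le)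
    have VD: "V \<xi> \<le> Dd" unfolding V_def Dd_def using a1 a3 a4 by (simp add: mult.assoc)
    have "G \<xi> \<le> exp(delta*\<xi>) * V \<xi>" unfolding G_def using cc_nonneg by simp
    also have "\<dots> \<le> exp(delta*\<xi>)*Dd" using VD by simp
    finally show ?thesis using xi(2) by blast
  qed
  have Gle0: "G t \<le> 0" if tt0: "t \<le> t0" for t
  proof (rule tendsto_lowerbound[OF exp_lim0[OF delta_pos, of Dd]])
    show "eventually (\<lambda>s. G t \<le> Dd * exp(delta * s)) at_bot"
      unfolding eventually_at_bot_linorder
    proof (rule exI[of _ t], intro allI impI)
      fix s assume st: "s \<le> t"
      then obtain \<xi> where xi: "\<xi> < s" "G \<xi> \<le> exp(delta*\<xi>)*Dd" using mvt[of s] st tt0 by auto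
      have "G t \<le> G \<xi>" using Gmono[of \<xi> t] xi st tt0 by auto
      also have "\<dots> \<le> exp(delta*\<xi>)*Dd" by (rule xi(2))
      also have "exp(delta*\<xi>) \<le> exp(delta * s)" using xi(1) delta_pos by simp
      hence "exp(delta*\<xi>)*Dd \<le> Dd*exp(delta * s)" using Dd_nonneg
        by (simp add: mult.commute mult_left_mono)
      finally show "G t \<le> Dd * exp(delta * s)" .
    qed
  qed simp
  define K where "K = sqrt (cc/be)"
  have K_nonneg: "K \<ge> 0" unfolding K_def using cc_nonneg be_pos by simp
  have zb: "\<bar>y t - 1\<bar> \<le> K * exp(2*m*t)" if "t \<le> t0" for t
  proof -
    have e: "exp((delta+4*m)*t) = exp(delta*t)*exp(4*m*t)"
      by (simp add: exp_add[symmetric] algebra_simps)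
    have "exp(delta*t)*V t \<le> cc*exp((delta+4*m)*t)" using Gle0[OF that] unfolding G_def by simp
    also have "\<dots> = exp(delta*t)*(cc*exp(4*m*t))" unfolding e by (simp add: algebra_simps)
    finally have V1: "V t \<le> cc*exp(4*m*t)" by simp
    have "V t = (y' t + al*(y t - 1)/2)^2 + (be + al^2/4)*(y t - 1)^2"
      unfolding V_def bb_def by (simp add: power2_eq_square field_simps)
    moreover have "al^2/4*(y t - 1)^2 \<ge> 0" by simp
    ultimately have V2: "be*(y t - 1)^2 \<le> V t"
      by (smt (verit) zero_le_power2 distrib_right)
    have "(y t - 1)^2 \<le> (cc/be)*exp(4*m*t)"
      using V1 V2 be_pos by (simp add: pos_le_divide_eq mult.commute)
    also have "\<dots> = (K*exp(2*m*t))^2"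
    proof -
      have "exp (2*m*t)^2 = exp (4*m*t)" by (rule exp_sq)
      moreover have "K^2 = cc/be" unfolding K_def using cc_nonneg be_pos by simp
      ultimately show ?thesis by (simp add: power_mult_distrib)
    qed
    finally have "\<bar>y t - 1\<bar> \<le> \<bar>K*exp(2*m*t)\<bar>" by (simp add: abs_le_square_iff)
    thus ?thesis using K_nonneg by simp
  qed
  show ?thesis
  proof (rule landau_o.bigI[of "K+1"])
    show "K + 1 > 0" using K_nonneg by simp
    show "eventually (\<lambda>t. norm (y t - 1) \<le> (K+1) * norm (exp (2 * mconst N p * t))) at_bot"
      unfolding eventually_at_bot_linorder
    proof (rule exI[of _ t0], intro allI impI)
      fix t assume "t \<le> t0"
      hence "\<bar>y t - 1\<bar> \<le> K * exp(2*m*t)" by (rule zb)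
      also have "\<dots> \<le> (K+1)*exp(2*m*t)" by (simp add: mult_right_mono)
      finally show "norm (y t - 1) \<le> (K+1) * norm (exp (2 * mconst N p * t))"
        unfolding m_def by simp
    qed
  qed
qed

end
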